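(* In the binary-input random coding setting described in the context, with message $1$ transmitted, for any $w'\neq1$ and any $\theta<0$, almost surely $$\lim_{N\to\infty}\frac1N\ln\mathbb E\big\{e^{N\theta\mathsf D(w')}\,\big|\,\underline{\mathsf T}\big\}=\mathbb E\Big[\ln\big(1+e^{\theta|\ln(q^+(\mathsf Y)/q^-(\mathsf Y))|}\big)\Big]-\ln2,$$ where on the right $\mathsf Y$ has density $(q^++q^-)/2$.
   Context: Let $q^+$ and $q^-$ be probability density functions on $\mathbb R$. They are the output densities of a binary-input memoryless channel when the input is $+1$ and $-1$, respectively. Assume: (A1) There exist $M_1>0$, $a>0$ and a polynomial $S_1$ with $q^\pm(y)<S_1(|y|)e^{-a|y|}$ for all $|y|>M_1$. (A2) There exist $M_2>0$ and a polynomial $S_2$ with $|\ln(q^+(y)/q^-(y))|<S_2(|y|)$ for all $|y|>M_2$. (A3) Let $\mathsf X$ be uniform on $\{+1,-1\}$, let $\mathsf Y$ have density $q^{+}$ given $\mathsf X=+1$ and $q^-$ given $\mathsf X=-1$, and let $\mathsf T=\ln(q^+(\mathsf Y)/q^-(\mathsf Y))$. The CDF $\Psi$ of $|\mathsf T|$ on $[0,\infty)$ and its inverse $\Psi^{-1}$ are smooth with finite first, second and third derivatives. Random coding: the codebook has $\lceil e^{NR}\rceil$ codewords $\underline{\mathsf X}(w)=(\mathsf X_1(w),\dots,\mathsf X_N(w))$, with all entries i.i.d. uniform on $\{\pm1\}$. Message $1$ is transmitted: given $\underline{\mathsf X}(1)$, the outputs $\mathsf Y_1,\dots,\mathsf Y_N$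 are independent, with $\mathsf Y_i$ having density $q^{\mathsf X_i(1)}$. Let $\mathsf T_i=\ln(q^+(\mathsf Y_i)/q^-(\mathsf Y_i))$ and $\underline{\mathsf T}=(\mathsf T_1,\dots,\mathsf T_N)$. Let $\mathsf R_i$ be the rank of $|\mathsf T_i|$ among $|\mathsf T_1|,\dots,|\mathsf T_N|$ (rank $1$ is the smallest). Let $\mathrm{sgn}(t)=1$ if $t\ge0$ and $-1$ otherwise. The CDF-ORBGRAND metric is $$\mathsf D(w)=\frac1N\sum_{i=1}^N\Psi^{-1}\Big(\frac{\mathsf R_i}{N+1}\Big)\mathbf 1\big(\mathrm{sgn}(\mathsf T_i)\mathsf X_i(w)<0\big).$$ *)

theory Defs
  imports "HOL-Probability.Probability" "HOL-Computational_Algebra.Polynomial"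
begin

definition is_pdf :: "(real \<Rightarrow> real) \<Rightarrow> bool" where
  "is_pdf q \<longleftrightarrow> q \<in> borel_measurable borel \<and> (\<forall>y. 0 \<le> q y)
      \<and> (\<integral>\<^sup>+ y. ennreal (q y) \<partial>lborel) = 1"

definition llr :: "(real \<Rightarrow> real) \<Rightarrow> (real \<Rightarrow> real) \<Rightarrow> real \<Rightarrow> real" where
  "llr qp qm y = ln (qp y / qm y)"

text \<open>Output distribution for a uniform input: density (q+ + q-)/2.\<close>
definition mix_out :: "(real \<Rightarrow> real) \<Rightarrow> (real \<Rightarrow> real) \<Rightarrow> real measure" where
  "mix_out qp qm = density lborel (\<lambda>y. ennreal ((qp y + qm y) / 2))"

text \<open>CDF of |T| (X uniform, Y | X with density q^X).\<close>
definition Psi :: "(real \<Rightarrow> real) \<Rightarrow> (real \<Rightarrow> real) \<Rightarrow> real \<Rightarrow> real" where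
  "Psi qp qm t = measure (mix_out qp qm) {y. \<bar>llr qp qm y\<bar> \<le> t}"

definition thrice_differentiable_on :: "(real \<Rightarrow> real) \<Rightarrow> real set \<Rightarrow> bool" where
  "thrice_differentiable_on f S \<longleftrightarrow> (\<exists>f1 f2 f3. \<forall>x\<in>S.
      (f has_real_derivative f1 x) (at x) \<and> (f1 has_real_derivative f2 x) (at x)
      \<and> (f2 has_real_derivative f3 x) (at x))"

definition sgnp :: "real \<Rightarrow> real" where
  "sgnp t = (if t \<ge> 0 then 1 else -1)"

text \<open>Rank of |T_i| among |T_1|,...,|T_N| (1 = smallest; ties broken by index).\<close>
definition rank :: "(nat \<Rightarrow> real) \<Rightarrow> nat \<Rightarrow> nat \<Rightarrow> nat" where
  "rank t N i = card {j\<in>{1..N}. \<bar>t j\<bar> < \<bar>t i\<bar> \<or> (\<bar>t j\<bar> = \<bar>t i\<bar> \<and> j \<le> i)}"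

definition orb_metric :: "(real \<Rightarrow> real) \<Rightarrow> nat \<Rightarrow> (nat \<Rightarrow> real) \<Rightarrow> (nat \<Rightarrow> real) \<Rightarrow> real" where
  "orb_metric Psiinv N t x =
     (1 / real N) * (\<Sum>i = 1..N. Psiinv (real (rank t N i) / real (N + 1))
        * (if sgnp (t i) * x i < 0 then 1 else 0))"

definition gen_sigma :: "'a measure \<Rightarrow> (nat \<Rightarrow> 'a \<Rightarrow> real) \<Rightarrow> nat \<Rightarrow> 'a measure" where
  "gen_sigma M T N = vimage_algebra (space M) (\<lambda>\<omega>. restrict (\<lambda>i. T i \<omega>) {1..N})
       (PiM {1..N} (\<lambda>_. borel))"

end

theory Submission
  imports Defs "HOL-Real_Asymp.Real_Asymp"
begin

definition rk_le :: "(nat \<Rightarrow> real) \<Rightarrow> nat \<Rightarrow> nat \<Rightarrow> bool" where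
  "rk_le t j i \<longleftrightarrow> (\<bar>t j\<bar> < \<bar>t i\<bar> \<or> (\<bar>t j\<bar> = \<bar>t i\<bar> \<and> j \<le> i))"

lemma rank_alt: "rank t N i = card {j\<in>{1..N}. rk_le t j i}"
  unfolding rank_def rk_le_def by simp

lemma rank_cong:
  assumes "\<forall>j\<in>{1..N}. t j = t' j" "i \<in> {1..N}"
  shows "rank t N i = rank t' N i"
  unfolding rank_def using assms by (intro arg_cong[where f=card] Collect_cong) auto

lemma rk_le_trans: "rk_le t j a \<Longrightarrow> rk_le t a b \<Longrightarrow> rk_le t j b"
  unfolding rk_le_def by auto
lemma rk_le_anti: "rk_le t a b \<Longrightarrow> a \<noteq> b \<Longrightarrow> \<not> rk_le t b a"
  unfolding rk_le_def by auto
lemma rk_le_total: "rk_le t a b \<or> rk_le t b a"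
  unfolding rk_le_def by auto
lemma rk_le_refl: "rk_le t a a" unfolding rk_le_def by simp

lemma rank_range: assumes "i \<in> {1..N}" shows "rank t N i \<in> {1..N}"
proof -
  have sub: "{j\<in>{1..N}. rk_le t j i} \<subseteq> {1..N}" by blast
  have c1: "card {j\<in>{1..N}. rk_le t j i} \<le> card {1..N}" by (rule card_mono[OF finite_atLeastAtMost sub])
  have iin: "i \<in> {j\<in>{1..N}. rk_le t j i}" using assms rk_le_refl by blast
  have fin: "finite {j\<in>{1..N}. rk_le t j i}" by (rule finite_subset[OF sub finite_atLeastAtMost])
  have "card {j\<in>{1..N}. rk_le t j i} \<noteq> 0" using fin iin card_0_eq by blast
  hence c2: "1 \<le> card {j\<in>{1..N}. rk_le t j i}" by linarith
  have c1': "card {j\<in>{1..N}. rk_le t j i} \<le> N" using c1 by (metis card_atLeastAtMost diff_Suc_1)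
  show ?thesis unfolding rank_alt by (rule atLeastAtMost_iff[THEN iffD2, OF conjI[OF c2 c1']])
qed

lemma rank_inj: "inj_on (rank t N) {1..N}"
proof
  fix i i' assume i: "i \<in> {1..N}" and i': "i' \<in> {1..N}" and eq: "rank t N i = rank t N i'"
  show "i = i'"
  proof (rule ccontr)
    assume ne: "i \<noteq> i'"
    have key: "rank t N a < rank t N b" if "a \<in> {1..N}" "b \<in> {1..N}" "rk_le t a b" "a \<noteq> b" for a b
    proof -
      have sub: "{j\<in>{1..N}. rk_le t j a} \<subseteq> {j\<in>{1..N}. rk_le t j b}"
        using that rk_le_trans by blast
      have "b \<notin> {j\<in>{1..N}. rk_le t j a}" using that rk_le_anti by blast
      moreover have "b \<in> {j\<in>{1..N}. rk_le t j b}" using that rk_le_refl by blast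
      ultimately have "{j\<in>{1..N}. rk_le t j a} \<subset> {j\<in>{1..N}. rk_le t j b}" using sub by blast
      thus ?thesis unfolding rank_alt by (intro psubset_card_mono) simp_all
    qed
    have "rk_le t i i' \<or> rk_le t i' i" by (rule rk_le_total)
    moreover have "\<not> rk_le t i i'" using key[OF i i' _ ne] eq by linarith
    moreover have "\<not> rk_le t i' i" using key[OF i' i _ ne[symmetric]] eq by linarith
    ultimately show False by blast
  qed
qed

lemma rank_bij: "bij_betw (rank t N) {1..N} {1..N}"
proof -
  have "rank t N ` {1..N} \<subseteq> {1..N}" using rank_range by blast
  moreover have "card (rank t N ` {1..N}) = card {1..N}" using rank_inj card_image by blast
  ultimately have "rank t N ` {1..N} = {1..N}" using card_subset_eq[of "{1..N}" "rank t N ` {1..N}"] by simp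
  thus ?thesis using rank_inj by (simp add: bij_betw_def)
qed

lemma prod_rank: "(\<Prod>i\<in>{1..N}. g (rank t N i)) = (\<Prod>k\<in>{1..N}. g k)"
  by (rule prod.reindex_bij_betw[OF rank_bij])

lemma ind_split_Ioo: "0 < a \<Longrightarrow> a \<le> b \<Longrightarrow> indicator {0<..<a} (u::real) + indicator {a..<b} u = (indicator {0<..<b} u :: real)"
  by (auto simp: indicator_def)

lemma ind_split_Ioc: "0 \<le> a \<Longrightarrow> a \<le> b \<Longrightarrow> indicator {0<..a} (u::real) + indicator {a<..b} u = (indicator {0<..b} u :: real)"
  by (auto simp: indicator_def)

lemma ind_sum_low:
  assumes h: "h > 0"
  shows "(\<Sum>k=1..m. indicator {real k * h - h <.. real k * h} u) = (indicator {0<..real m * h} u :: real)"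
proof (induction m)
  case 0 then show ?case by (simp add: indicator_def)
next
  case (Suc m)
  have e: "real (Suc m) * h - h = real m * h" "real (Suc m) * h = real m * h + h" by (simp_all add: algebra_simps)
  have "(\<Sum>k=1..Suc m. indicator {real k * h - h <.. real k * h} u)
      = (\<Sum>k=1..m. indicator {real k * h - h <.. real k * h} u) + (indicator {real (Suc m) * h - h <.. real (Suc m) * h} u :: real)"
    by (simp add: sum.cl_ivl_Suc)
  also have "\<dots> = indicator {0<..real m * h} u + indicator {real m * h <.. real m * h + h} u"
    by (simp only: Suc.IH e(1)) (simp only: e(2))
  also have "\<dots> = indicator {0<..real m * h + h} u"
    using h by (intro ind_split_Ioc) auto
  finally show ?case unfolding e(2) .
qed

lemma ind_sum_up:
  assumes h: "h > 0"
  shows "indicator {0<..<h} u + (\<Sum>k=1..m. indicator {real k * h ..< real k * h + h} u) = (indicator {0<..<real m * h + h} u :: real)"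
proof (induction m)
  case 0 then show ?case by (simp add: indicator_def)
next
  case (Suc m)
  have e: "real (Suc m) * h = real m * h + h" by (simp add: algebra_simps)
  have "indicator {0<..<h} u + (\<Sum>k=1..Suc m. indicator {real k * h ..< real k * h + h} u)
      = (indicator {0<..<h} u + (\<Sum>k=1..m. indicator {real k * h ..< real k * h + h} u)) + (indicator {real (Suc m) * h ..< real (Suc m) * h + h} u :: real)"
    by (simp add: sum.cl_ivl_Suc)
  also have "\<dots> = indicator {0<..<real m * h + h} u + indicator {real m * h + h ..< real m * h + h + h} u"
    by (simp only: Suc.IH e)
  also have "\<dots> = indicator {0<..<real m * h + h + h} u"
    using h by (intro ind_split_Ioo) (auto intro: add_nonneg_pos)
  finally show ?case unfolding e .
qed

lemma int_c_ind:
  assumes "a \<le> b"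
  fixes c :: real
  shows "(\<integral>u. c * indicator {a<..b} u \<partial>lborel) = c * (b - a)"
    and "(\<integral>u. c * indicator {a..<b} u \<partial>lborel) = c * (b - a)"
    and "(\<integral>u. c * indicator {a<..<b} u \<partial>lborel) = c * (b - a)"
  using assms by simp_all

lemma integrable_c_indA:
  assumes "A \<in> sets borel" "bounded A"
  shows "integrable lborel (\<lambda>u. (c::real) * indicator A u)"
  apply (rule integrable_mult_right)
  apply (rule integrable_real_indicator)
   apply (simp add: assms(1))
  apply (rule emeasure_bounded_finite[OF assms(2)])
  done

lemma integrable_c_ind1: "integrable lborel (\<lambda>u::real. c * indicator {a<..b} u :: real)"
  by (rule integrable_c_indA) simp_all
lemma integrable_c_ind2: "integrable lborel (\<lambda>u::real. c * indicator {a..<b} u :: real)"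
  by (rule integrable_c_indA) simp_all
lemma integrable_c_ind3: "integrable lborel (\<lambda>u::real. c * indicator {a<..<b} u :: real)"
  by (rule integrable_c_indA) simp_all
lemmas integrable_c_ind = integrable_c_ind1 integrable_c_ind2 integrable_c_ind3


lemma riemann_bounds:
  fixes \<phi> :: "real \<Rightarrow> real" and C :: real and N :: nat
  assumes dec: "\<And>u v. 0 < u \<Longrightarrow> u \<le> v \<Longrightarrow> v < 1 \<Longrightarrow> \<phi> v \<le> \<phi> u"
    and bnd: "\<And>u. 0 < u \<Longrightarrow> u < 1 \<Longrightarrow> 0 \<le> \<phi> u \<and> \<phi> u \<le> C"
    and meas: "(\<lambda>u. \<phi> u * indicator {0<..<1} u) \<in> borel_measurable lborel"
    and hdef: "h = 1 / real (N+1)"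
  shows "h * (\<Sum>k=1..N. \<phi> (real k * h)) \<le> (\<integral>u. \<phi> u * indicator {0<..<1} u \<partial>lborel)"
    and "(\<integral>u. \<phi> u * indicator {0<..<1} u \<partial>lborel) \<le> C * h + h * (\<Sum>k=1..N. \<phi> (real k * h))"
proof -
  define \<psi> where "\<psi> u = \<phi> u * indicator {0<..<1} u" for u
  have h0: "h > 0" using hdef by simp
  have Nh: "real N * h + h = 1" using hdef by (simp add: field_simps)
  have kh1: "real k * h < 1" if "k \<le> N" for k
  proof -
    have "real k * h \<le> real N * h" using that h0 by (simp add: mult_right_mono)
    thus ?thesis using Nh h0 by linarith
  qed
  have C0: "0 \<le> C" using bnd[of "1/2"] by auto
  have psi0: "0 \<le> \<psi> u" for u using bnd[of u] by (auto simp: \<psi>_def indicator_def)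
  have psi_le: "\<psi> u \<le> C" for u using bnd[of u] C0 by (auto simp: \<psi>_def indicator_def)
  have int_psi: "integrable lborel \<psi>"
  proof (rule Bochner_Integration.integrable_bound[OF integrable_c_ind3[of C 0 1]])
    show "\<psi> \<in> borel_measurable lborel" using meas unfolding \<psi>_def .
    show "AE x in lborel. norm (\<psi> x) \<le> norm (C * indicator {0<..<1} x)"
      using bnd C0 by (auto simp: \<psi>_def indicator_def)
  qed
  define A where "A k = {real k * h - h <.. real k * h}" for k :: nat
  define B where "B k = {real k * h ..< real k * h + h}" for k :: nat
  have intA: "(\<integral>u. \<phi> (real k * h) * indicator (A k) u \<partial>lborel) = \<phi> (real k * h) * h" for k
    unfolding A_def using h0 int_c_ind(1)[of "real k * h - h" "real k * h" "\<phi> (real k * h)"] by simp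
  have intB: "(\<integral>u. \<phi> (real k * h) * indicator (B k) u \<partial>lborel) = \<phi> (real k * h) * h" for k
    unfolding B_def using h0 int_c_ind(2)[of "real k * h" "real k * h + h" "\<phi> (real k * h)"] by simp
  have iA: "integrable lborel (\<lambda>u. \<phi> (real k * h) * indicator (A k) u)" for k
    unfolding A_def by (rule integrable_c_ind)
  have iB: "integrable lborel (\<lambda>u. \<phi> (real k * h) * indicator (B k) u)" for k
    unfolding B_def by (rule integrable_c_ind)
  have pt_low: "(\<Sum>k=1..N. \<phi> (real k * h) * indicator (A k) u) \<le> \<psi> u" for u
  proof -
    have "(\<Sum>k=1..N. \<phi> (real k * h) * indicator (A k) u) \<le> (\<Sum>k=1..N. \<psi> u * indicator (A k) u)"
    proof (rule sum_mono)
      fix k assume k: "k \<in> {1..N}"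
      show "\<phi> (real k * h) * indicator (A k) u \<le> \<psi> u * indicator (A k) u"
      proof (cases "u \<in> A k")
        case True
        have k1: "real k * h - h \<ge> 0" using k h0 by (simp add: algebra_simps)
        have u00: "real k * h - h < u" "u \<le> real k * h" using True unfolding A_def by auto
        have u0: "0 < u" "u \<le> real k * h" using u00 k1 by linarith+
        have "real k * h < 1" using kh1 k by simp
        hence "\<phi> (real k * h) \<le> \<phi> u" using dec[OF u0(1) u0(2)] by simp
        moreover have "\<psi> u = \<phi> u" using u0 \<open>real k * h < 1\<close> by (simp add: \<psi>_def indicator_def)
        ultimately show ?thesis using True by simp
      qed simp
    qed
    also have "\<dots> = \<psi> u * (\<Sum>k=1..N. indicator (A k) u)" by (simp add: sum_distrib_left)
    also have "\<dots> = \<psi> u * indicator {0<..real N * h} u" unfolding A_def using ind_sum_low[OF h0] by simp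
    also have "\<dots> \<le> \<psi> u" using psi0[of u] by (simp add: indicator_def)
    finally show ?thesis .
  qed
  have "h * (\<Sum>k=1..N. \<phi> (real k * h)) = (\<Sum>k=1..N. \<integral>u. \<phi> (real k * h) * indicator (A k) u \<partial>lborel)"
    unfolding intA by (simp add: sum_distrib_left mult.commute)
  also have "\<dots> = (\<integral>u. (\<Sum>k=1..N. \<phi> (real k * h) * indicator (A k) u) \<partial>lborel)"
    by (rule Bochner_Integration.integral_sum[where f="\<lambda>k u. \<phi> (real k * h) * indicator (A k) u", symmetric]) (rule iA)
  also have "\<dots> \<le> integral\<^sup>L lborel \<psi>"
    by (rule Bochner_Integration.integral_mono[OF Bochner_Integration.integrable_sum[OF iA] int_psi pt_low])
  finally show "h * (\<Sum>k=1..N. \<phi> (real k * h)) \<le> (\<integral>u. \<phi> u * indicator {0<..<1} u \<partial>lborel)"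
    unfolding \<psi>_def .
  have pt_up: "\<psi> u \<le> C * indicator {0<..<h} u + (\<Sum>k=1..N. \<phi> (real k * h) * indicator (B k) u)" for u
  proof -
    have "\<psi> u = \<psi> u * indicator {0<..<1} u" by (simp add: \<psi>_def indicator_def)
    also have "\<dots> = \<psi> u * (indicator {0<..<h} u + (\<Sum>k=1..N. indicator (B k) u))"
      unfolding B_def using ind_sum_up[OF h0, of u N] Nh by simp
    also have "\<dots> = \<psi> u * indicator {0<..<h} u + (\<Sum>k=1..N. \<psi> u * indicator (B k) u)"
      by (simp add: sum_distrib_left distrib_left)
    also have "\<dots> \<le> C * indicator {0<..<h} u + (\<Sum>k=1..N. \<phi> (real k * h) * indicator (B k) u)"
    proof (rule add_mono)
      show "\<psi> u * indicator {0<..<h} u \<le> C * indicator {0<..<h} u"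
        using psi_le[of u] by (simp add: indicator_def)
      show "(\<Sum>k=1..N. \<psi> u * indicator (B k) u) \<le> (\<Sum>k=1..N. \<phi> (real k * h) * indicator (B k) u)"
      proof (rule sum_mono)
        fix k assume k: "k \<in> {1..N}"
        show "\<psi> u * indicator (B k) u \<le> \<phi> (real k * h) * indicator (B k) u"
        proof (cases "u \<in> B k")
          case True
          have k0: "real k * h > 0" using k h0 by simp
          have "real k * h \<le> real N * h" using k h0 by (intro mult_right_mono) auto
          hence "real k * h + h \<le> 1" using Nh by linarith
          hence u1: "real k * h \<le> u" "u < 1" using True unfolding B_def by auto
          hence "\<phi> u \<le> \<phi> (real k * h)" using dec[OF k0 u1(1) u1(2)] by simp
          moreover have "\<psi> u = \<phi> u" using u1 k0 by (simp add: \<psi>_def indicator_def)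
          ultimately show ?thesis using True by simp
        qed simp
      qed
    qed
    finally show ?thesis .
  qed
  have "integral\<^sup>L lborel \<psi> \<le> (\<integral>u. C * indicator {0<..<h} u + (\<Sum>k=1..N. \<phi> (real k * h) * indicator (B k) u) \<partial>lborel)"
    by (rule Bochner_Integration.integral_mono[OF int_psi Bochner_Integration.integrable_add[OF integrable_c_ind(3) Bochner_Integration.integrable_sum[OF iB]] pt_up])
  also have "\<dots> = C * h + (\<Sum>k=1..N. \<integral>u. \<phi> (real k * h) * indicator (B k) u \<partial>lborel)"
  proof -
    have e1: "(\<integral>u. C * indicator {0<..<h} u + (\<Sum>k=1..N. \<phi> (real k * h) * indicator (B k) u) \<partial>lborel)
       = (\<integral>u. C * indicator {0<..<h} u \<partial>lborel) + (\<integral>u. (\<Sum>k=1..N. \<phi> (real k * h) * indicator (B k) u) \<partial>lborel)"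
      by (rule Bochner_Integration.integral_add[OF integrable_c_ind(3) Bochner_Integration.integrable_sum[OF iB]])
    have e2: "(\<integral>u. (\<Sum>k=1..N. \<phi> (real k * h) * indicator (B k) u) \<partial>lborel) = (\<Sum>k=1..N. \<integral>u. \<phi> (real k * h) * indicator (B k) u \<partial>lborel)"
      by (rule Bochner_Integration.integral_sum[where f="\<lambda>k u. \<phi> (real k * h) * indicator (B k) u"]) (rule iB)
    have e3: "(\<integral>u. C * indicator {0<..<h} u \<partial>lborel) = C * h" using int_c_ind(3)[of 0 h C] h0 by simp
    show ?thesis unfolding e1 e2 e3 ..
  qed
  also have "\<dots> = C * h + h * (\<Sum>k=1..N. \<phi> (real k * h))"
    unfolding intB by (simp add: sum_distrib_left mult.commute)
  finally show "(\<integral>u. \<phi> u * indicator {0<..<1} u \<partial>lborel) \<le> C * h + h * (\<Sum>k=1..N. \<phi> (real k * h))"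
    unfolding \<psi>_def .
qed


lemma riemann_lim:
  fixes \<phi> :: "real \<Rightarrow> real" and C :: real
  assumes dec: "\<And>u v. 0 < u \<Longrightarrow> u \<le> v \<Longrightarrow> v < 1 \<Longrightarrow> \<phi> v \<le> \<phi> u"
    and bnd: "\<And>u. 0 < u \<Longrightarrow> u < 1 \<Longrightarrow> 0 \<le> \<phi> u \<and> \<phi> u \<le> C"
    and meas: "(\<lambda>u. \<phi> u * indicator {0<..<1} u) \<in> borel_measurable lborel"
  shows "(\<lambda>N. (\<Sum>k=1..N. \<phi> (real k / real (N+1))) / real N) \<longlonglongrightarrow> (\<integral>u. \<phi> u * indicator {0<..<1} u \<partial>lborel)"
proof -
  define I where "I = (\<integral>u. \<phi> u * indicator {0<..<1} u \<partial>lborel)"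
  define a where "a N = (1 / real (N+1)) * (\<Sum>k=1..N. \<phi> (real k * (1 / real (N+1))))" for N :: nat
  have lo: "I - C * (1 / real (N+1)) \<le> a N" for N
    using riemann_bounds(2)[OF dec bnd meas, of "1 / real (N+1)" N] unfolding a_def I_def by simp
  have hi: "a N \<le> I" for N
    using riemann_bounds(1)[OF dec bnd meas, of "1 / real (N+1)" N] unfolding a_def I_def by simp
  have h0: "(\<lambda>N. 1 / real (N+1)) \<longlonglongrightarrow> 0" by real_asymp
  have "(\<lambda>N. I - C * (1 / real (N+1))) \<longlonglongrightarrow> I - C * 0"
    by (intro tendsto_intros h0)
  hence "(\<lambda>N. I - C * (1 / real (N+1))) \<longlonglongrightarrow> I" by simp
  hence aI: "a \<longlonglongrightarrow> I" using lo hi by (intro tendsto_sandwich[of _ a _ "\<lambda>_. I"]) auto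
  have r1: "(\<lambda>N. real (N+1) / real N) \<longlonglongrightarrow> 1" by real_asymp
  have "(\<lambda>N. a N * (real (N+1) / real N)) \<longlonglongrightarrow> I * 1" by (intro tendsto_mult aI r1)
  moreover have eqN: "a N * (real (N+1) / real N) = (\<Sum>k=1..N. \<phi> (real k / real (N+1))) / real N" for N
  proof -
    have eqS: "(\<Sum>k=1..N. \<phi> (real k * (1 / real (N+1)))) = (\<Sum>k=1..N. \<phi> (real k / real (N+1)))" by simp
    have np: "real (N+1) \<noteq> 0" by simp
    have g: "(1 / real (N+1)) * S * (real (N+1) / real N) = S / real N" for S :: real
    proof -
      have "\<And>x n S :: real. x \<noteq> 0 \<Longrightarrow> (1 / x) * S * (x / n) = S / n" by simp
      thus ?thesis using np by blast
    qed
    show ?thesis unfolding a_def eqS by (rule g)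
  qed
  ultimately have "(\<lambda>N. (\<Sum>k=1..N. \<phi> (real k / real (N+1))) / real N) \<longlonglongrightarrow> I * 1"
    by (simp only: eqN)
  thus ?thesis unfolding I_def by simp
qed

lemma sets_mix_out[simp, measurable_cong]: "sets (mix_out qp qm) = sets borel"
  unfolding mix_out_def by simp

lemma space_mix_out[simp]: "space (mix_out qp qm) = UNIV"
  unfolding mix_out_def by simp

lemma pdf_meas: "is_pdf q \<Longrightarrow> q \<in> borel_measurable borel"
  unfolding is_pdf_def by simp

lemma llr_meas:
  assumes "is_pdf qp" "is_pdf qm"
  shows "llr qp qm \<in> borel_measurable borel"
proof -
  have [measurable]: "qp \<in> borel_measurable borel" "qm \<in> borel_measurable borel"
    using assms by (simp_all add: pdf_meas)
  show ?thesis unfolding llr_def[abs_def] by measurable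
qed

lemma mix_out_prob:
  assumes p: "is_pdf qp" and m: "is_pdf qm"
  shows "prob_space (mix_out qp qm)"
proof
  have [measurable]: "qp \<in> borel_measurable borel" "qm \<in> borel_measurable borel"
    using p m by (simp_all add: pdf_meas)
  have nn: "0 \<le> qp y" "0 \<le> qm y" for y using p m unfolding is_pdf_def by auto
  have e: "ennreal ((qp y + qm y) / 2) = ennreal (1/2) * ennreal (qp y) + ennreal (1/2) * ennreal (qm y)" for y
  proof -
    have "(qp y + qm y) / 2 = 1/2 * qp y + 1/2 * qm y" by simp
    hence "ennreal ((qp y + qm y) / 2) = ennreal (1/2 * qp y) + ennreal (1/2 * qm y)"
      unfolding \<open>(qp y + qm y) / 2 = _\<close> using nn[of y] by (intro ennreal_plus) auto
    also have "\<dots> = ennreal (1/2) * ennreal (qp y) + ennreal (1/2) * ennreal (qm y)"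
      using nn[of y] by (subst (1 2) ennreal_mult) auto
    finally show ?thesis .
  qed
  have "emeasure (mix_out qp qm) (space (mix_out qp qm)) = (\<integral>\<^sup>+ y. ennreal ((qp y + qm y) / 2) \<partial>lborel)"
    unfolding mix_out_def by (subst emeasure_density) (auto intro!: nn_integral_cong)
  also have "\<dots> = (\<integral>\<^sup>+ y. ennreal (1/2) * ennreal (qp y) + ennreal (1/2) * ennreal (qm y) \<partial>lborel)"
    by (simp only: e)
  also have "\<dots> = ennreal (1/2) * (\<integral>\<^sup>+ y. ennreal (qp y) \<partial>lborel) + ennreal (1/2) * (\<integral>\<^sup>+ y. ennreal (qm y) \<partial>lborel)"
    by (simp add: nn_integral_add nn_integral_cmult)
  also have "\<dots> = ennreal (1/2) * 1 + ennreal (1/2) * 1"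
  proof -
    have i1: "(\<integral>\<^sup>+ y. ennreal (qp y) \<partial>lborel) = 1" "(\<integral>\<^sup>+ y. ennreal (qm y) \<partial>lborel) = 1"
      using p m unfolding is_pdf_def by auto
    show ?thesis unfolding i1 ..
  qed
  also have "\<dots> = ennreal (1/2 + 1/2)" by (simp only: mult_1_right, subst ennreal_plus) auto
  also have "\<dots> = 1" by simp
  finally show "emeasure (mix_out qp qm) (space (mix_out qp qm)) = 1" .
qed


locale psi_ctx =
  fixes qp qm Psiinv :: "real \<Rightarrow> real"
  assumes p: "is_pdf qp" and m: "is_pdf qm"
    and inv1: "\<forall>u\<in>{0<..<1}. Psiinv u > 0 \<and> Psi qp qm (Psiinv u) = u"
    and inv2: "\<forall>t>0. Psiinv (Psi qp qm t) = t"
begin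

lemma T_meas[measurable]: "(\<lambda>y. \<bar>llr qp qm y\<bar>) \<in> borel_measurable borel"
  using llr_meas[OF p m] by measurable

lemma P_prob: "prob_space (mix_out qp qm)" by (rule mix_out_prob[OF p m])

end

sublocale psi_ctx \<subseteq> P: prob_space "mix_out qp qm" by (rule P_prob)

context psi_ctx begin

lemma Tset[measurable]: "{y. \<bar>llr qp qm y\<bar> \<le> t} \<in> sets borel"
  by measurable

lemma Psi_mono: "t \<le> s \<Longrightarrow> Psi qp qm t \<le> Psi qp qm s"
  unfolding Psi_def
  by (rule P.finite_measure_mono) auto

lemma Psi_nonneg: "0 \<le> Psi qp qm t" unfolding Psi_def by simp

lemma Psi_le1: "Psi qp qm t \<le> 1"
  unfolding Psi_def by (rule P.prob_le_1)

lemma Psi_neg: "t < 0 \<Longrightarrow> Psi qp qm t = 0"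
proof -
  assume "t < 0"
  hence "{y. \<bar>llr qp qm y\<bar> \<le> t} = {}" by auto
  thus ?thesis unfolding Psi_def by simp
qed

lemma inv1': "0 < u \<Longrightarrow> u < 1 \<Longrightarrow> Psiinv u > 0 \<and> Psi qp qm (Psiinv u) = u"
  using inv1 by auto

lemma Psi_0: "Psi qp qm 0 = 0"
proof (rule ccontr)
  assume ne: "Psi qp qm 0 \<noteq> 0"
  define c where "c = Psi qp qm 0"
  have c0: "0 < c" using ne Psi_nonneg[of 0] unfolding c_def by linarith
  have c1: "c \<le> 1" using Psi_le1 unfolding c_def by simp
  have u: "0 < c/2" "c/2 < 1" using c0 c1 by auto
  have "Psi qp qm 0 \<le> Psi qp qm (Psiinv (c/2))" using inv1'[OF u] by (intro Psi_mono) simp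
  also have "\<dots> = c/2" using inv1'[OF u] by simp
  finally show False using c0 unfolding c_def by simp
qed

lemma Psi_nonpos: "t \<le> 0 \<Longrightarrow> Psi qp qm t = 0"
  using Psi_0 Psi_neg by (cases "t = 0") auto

lemma Psi_pos: assumes t: "t > 0" shows "0 < Psi qp qm t" "Psi qp qm t < 1"
proof -
  show "Psi qp qm t < 1"
  proof (rule ccontr)
    assume "\<not> Psi qp qm t < 1"
    hence e1: "Psi qp qm t = 1" using Psi_le1[of t] by linarith
    have "Psi qp qm t \<le> Psi qp qm (t+1)" by (rule Psi_mono) simp
    hence e2: "Psi qp qm (t+1) = 1" using e1 Psi_le1[of "t+1"] by linarith
    have "t = Psiinv (Psi qp qm t)" using inv2 t by simp
    also have "\<dots> = Psiinv (Psi qp qm (t+1))" using e1 e2 by simp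
    also have "\<dots> = t + 1" using inv2 t by simp
    finally show False by simp
  qed
  show "0 < Psi qp qm t"
  proof (rule ccontr)
    assume "\<not> 0 < Psi qp qm t"
    hence e1: "Psi qp qm t = 0" using Psi_nonneg[of t] by linarith
    have "Psi qp qm (t/2) \<le> Psi qp qm t" by (rule Psi_mono) (use t in simp)
    hence e2: "Psi qp qm (t/2) = 0" using e1 Psi_nonneg[of "t/2"] by linarith
    have "t = Psiinv (Psi qp qm t)" using inv2 t by simp
    also have "\<dots> = Psiinv (Psi qp qm (t/2))" using e1 e2 by simp
    also have "\<dots> = t/2" using inv2 t by simp
    finally show False using t by simp
  qed
qed

lemma Psiinv_mono: assumes "0 < u" "u \<le> v" "v < 1" shows "Psiinv u \<le> Psiinv v"
proof (rule ccontr)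
  assume "\<not> Psiinv u \<le> Psiinv v"
  hence "Psiinv v \<le> Psiinv u" by simp
  hence "Psi qp qm (Psiinv v) \<le> Psi qp qm (Psiinv u)" by (rule Psi_mono)
  hence "v \<le> u" using inv1'[of u] inv1'[of v] assms by simp
  hence "u = v" using assms by simp
  thus False using \<open>\<not> Psiinv u \<le> Psiinv v\<close> by simp
qed

lemma quant_iff: assumes u: "0 < u" "u < 1" and t: "t > 0"
  shows "Psiinv u \<le> t \<longleftrightarrow> u \<le> Psi qp qm t"
proof
  assume "Psiinv u \<le> t"
  hence "Psi qp qm (Psiinv u) \<le> Psi qp qm t" by (rule Psi_mono)
  thus "u \<le> Psi qp qm t" using inv1'[OF u] by simp
next
  assume "u \<le> Psi qp qm t"
  hence "Psiinv u \<le> Psiinv (Psi qp qm t)" using Psi_pos[OF t] u by (intro Psiinv_mono) auto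
  thus "Psiinv u \<le> t" using inv2 t by simp
qed


lemma quantile:
  fixes g :: "real \<Rightarrow> real"
  assumes contP: "continuous_on {0<..<1} Psiinv" and g[measurable]: "g \<in> borel_measurable borel"
  shows "(\<integral>y. g \<bar>llr qp qm y\<bar> \<partial>mix_out qp qm) = (\<integral>u. g (Psiinv u) * indicator {0<..<1} u \<partial>lborel)"
proof -
  define S where "S = {0<..<1::real}"
  define Q where "Q u = indicator S u * Psiinv u + (1 - indicator S u)" for u
  have QS: "u \<in> S \<Longrightarrow> Q u = Psiinv u" for u unfolding Q_def by simp
  have "(\<lambda>x. indicator S x *\<^sub>R Psiinv x) \<in> borel_measurable borel"
    by (rule borel_measurable_continuous_on_indicator) (simp_all add: contP S_def)
  hence Qm[measurable]: "Q \<in> borel_measurable borel" unfolding Q_def[abs_def] S_def by simp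
  define U where "U = uniform_measure lborel S"
  have eS: "emeasure lborel S = 1" unfolding S_def by simp
  have U_prob: "prob_space U" unfolding U_def by (rule prob_space_uniform_measure) (simp_all add: eS)
  have sU[measurable_cong]: "sets U = sets borel" unfolding U_def by simp
  have spU: "space U = UNIV" unfolding U_def by simp
  have QmU: "Q \<in> borel_measurable U" using Qm by (simp add: measurable_cong_sets[OF sU refl])
  have TmP: "(\<lambda>y. \<bar>llr qp qm y\<bar>) \<in> borel_measurable (mix_out qp qm)"
    using T_meas by (simp add: measurable_cong_sets[OF sets_mix_out refl])
  define \<mu> where "\<mu> = distr (mix_out qp qm) borel (\<lambda>y. \<bar>llr qp qm y\<bar>)"
  define \<nu> where "\<nu> = distr U borel Q"
  have rd1: "real_distribution \<mu>" unfolding \<mu>_def by (rule P.real_distribution_distr[OF TmP])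
  have rd2: "real_distribution \<nu>" unfolding \<nu>_def by (rule prob_space.real_distribution_distr[OF U_prob QmU])
  have cdf1: "cdf \<mu> t = Psi qp qm t" for t
  proof -
    have "cdf \<mu> t = measure (mix_out qp qm) ((\<lambda>y. \<bar>llr qp qm y\<bar>) -` {..t} \<inter> space (mix_out qp qm))"
      unfolding cdf_def2 \<mu>_def by (rule measure_distr[OF TmP]) simp
    also have "(\<lambda>y. \<bar>llr qp qm y\<bar>) -` {..t} \<inter> space (mix_out qp qm) = {y. \<bar>llr qp qm y\<bar> \<le> t}" by auto
    finally show ?thesis unfolding Psi_def .
  qed
  have cdf2: "cdf \<nu> t = Psi qp qm t" for t
  proof -
    have "cdf \<nu> t = measure U (Q -` {..t} \<inter> space U)"
      unfolding cdf_def2 \<nu>_def by (rule measure_distr[OF QmU]) simp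
    also have "\<dots> = measure lborel (S \<inter> (Q -` {..t} \<inter> space U)) / measure lborel S"
      unfolding U_def using measurable_sets_borel[OF Qm, of "{..t}"] by (intro measure_uniform_measure) (simp_all add: eS spU)
    also have "measure lborel S = 1" unfolding S_def by simp
    also have "S \<inter> (Q -` {..t} \<inter> space U) = (if t > 0 then {0<..Psi qp qm t} else {})"
    proof (cases "t > 0")
      case True
      have "u \<in> S \<inter> (Q -` {..t} \<inter> space U) \<longleftrightarrow> u \<in> {0<..Psi qp qm t}" for u
      proof (cases "u \<in> S")
        case True
        hence u: "0 < u" "u < 1" unfolding S_def by auto
        show ?thesis using quant_iff[OF u \<open>t > 0\<close>] QS[OF \<open>u \<in> S\<close>] u \<open>u \<in> S\<close> by (auto simp: spU)
      next
        case False
        thus ?thesis using Psi_pos[OF \<open>t > 0\<close>] unfolding S_def by auto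
      qed
      hence "S \<inter> (Q -` {..t} \<inter> space U) = {0<..Psi qp qm t}" by blast
      thus ?thesis using True by simp
    next
      case False
      have "u \<notin> S \<inter> (Q -` {..t} \<inter> space U)" for u
      proof
        assume u: "u \<in> S \<inter> (Q -` {..t} \<inter> space U)"
        hence "u \<in> S" by blast
        hence "0 < Psiinv u" "Q u = Psiinv u" using inv1' QS unfolding S_def by auto
        moreover have "Q u \<le> t" using u by auto
        ultimately show False using False by simp
      qed
      hence "S \<inter> (Q -` {..t} \<inter> space U) = {}" by blast
      thus ?thesis using False by simp
    qed
    finally show ?thesis using Psi_pos[of t] Psi_nonpos[of t] by (cases "t > 0") auto
  qed
  have "\<mu> = \<nu>" by (rule cdf_unique[OF rd1 rd2]) (simp add: fun_eq_iff cdf1 cdf2)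
  hence "integral\<^sup>L \<mu> g = integral\<^sup>L \<nu> g" by simp
  hence "(\<integral>y. g \<bar>llr qp qm y\<bar> \<partial>mix_out qp qm) = (\<integral>u. g (Q u) \<partial>U)"
    unfolding \<mu>_def \<nu>_def by (simp add: Bochner_Integration.integral_distr[OF TmP g] Bochner_Integration.integral_distr[OF QmU g])
  also have "U = density lborel (\<lambda>x. ennreal (indicator S x))"
    unfolding U_def uniform_measure_def eS by (simp add: ennreal_indicator divide_ennreal_def)
  also have "(\<integral>u. g (Q u) \<partial>density lborel (\<lambda>x. ennreal (indicator S x))) = (\<integral>u. indicator S u *\<^sub>R g (Q u) \<partial>lborel)"
    by (rule integral_density) (auto simp: S_def)
  also have "\<dots> = (\<integral>u. g (Psiinv u) * indicator {0<..<1} u \<partial>lborel)"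
    by (rule Bochner_Integration.integral_cong) (auto simp: QS S_def indicator_def)
  finally show ?thesis .
qed

end

lemma fst_bm[measurable]: "(fst :: real \<times> real \<Rightarrow> real) \<in> borel_measurable borel"
  by (intro borel_measurable_continuous_onI continuous_on_fst continuous_on_id)
lemma snd_bm[measurable]: "(snd :: real \<times> real \<Rightarrow> real) \<in> borel_measurable borel"
  by (intro borel_measurable_continuous_onI continuous_on_snd continuous_on_id)

lemma real_rank_sum: "real (rank t N i) = (\<Sum>j\<in>{1..N}. if rk_le t j i then 1 else 0)"
proof -
  have "real (rank t N i) = (\<Sum>j\<in>{j\<in>{1..N}. rk_le t j i}. 1)" unfolding rank_alt by (rule real_of_card)
  also have "\<dots> = (\<Sum>j\<in>{1..N}. if rk_le t j i then 1 else 0)" by (rule sum.inter_filter) simp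
  finally show ?thesis .
qed

lemma rank_meas:
  assumes t: "\<And>j. j \<in> {1..N} \<Longrightarrow> (\<lambda>\<omega>. t \<omega> j) \<in> borel_measurable M" and i: "i \<in> {1..N}"
  shows "(\<lambda>\<omega>. rank (t \<omega>) N i) \<in> measurable M (count_space UNIV)"
proof -
  have ti[measurable]: "(\<lambda>\<omega>. t \<omega> i) \<in> borel_measurable M" using t i by simp
  have sm: "(\<lambda>\<omega>. (\<Sum>j\<in>{1..N}. if rk_le (t \<omega>) j i then 1 else 0) :: real) \<in> borel_measurable M"
  proof (rule borel_measurable_sum)
    fix j assume j: "j \<in> {1..N}"
    have [measurable]: "(\<lambda>\<omega>. t \<omega> j) \<in> borel_measurable M" using t j by simp
    show "(\<lambda>\<omega>. if rk_le (t \<omega>) j i then 1 else 0 :: real) \<in> borel_measurable M"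
      unfolding rk_le_def by measurable
  qed
  show ?thesis
  proof (subst measurable_count_space_eq2_countable, intro conjI ballI)
    show "(\<lambda>\<omega>. rank (t \<omega>) N i) \<in> space M \<rightarrow> UNIV" by simp
    fix n :: nat
    have "(\<lambda>\<omega>. rank (t \<omega>) N i) -` {n} \<inter> space M = {\<omega>\<in>space M. (\<Sum>j\<in>{1..N}. if rk_le (t \<omega>) j i then 1 else 0 :: real) = real n}"
    proof -
      have e: "(\<Sum>j\<in>{1..N}. if rk_le (t \<omega>) j i then 1 else 0 :: real) = real (rank (t \<omega>) N i)" for \<omega>
        by (rule real_rank_sum[symmetric])
      show ?thesis unfolding e by auto
    qed
    also have "\<dots> \<in> sets M" using sm by measurable
    finally show "(\<lambda>\<omega>. rank (t \<omega>) N i) -` {n} \<inter> space M \<in> sets M" .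
  qed
qed


lemma comp_meas: "f \<in> M \<rightarrow>\<^sub>M PiM I (\<lambda>_. borel) \<Longrightarrow> j \<in> I \<Longrightarrow> (\<lambda>\<omega>. f \<omega> j) \<in> borel_measurable M"
  using measurable_compose[OF _ measurable_component_singleton] by simp

definition aa :: "(real \<Rightarrow> real) \<Rightarrow> (real \<Rightarrow> real) \<Rightarrow> (real \<Rightarrow> real) \<Rightarrow> nat \<Rightarrow> (nat \<Rightarrow> real) \<Rightarrow> nat \<Rightarrow> real" where
  "aa qp qm Psiinv N y i = Psiinv (real (rank (\<lambda>j. llr qp qm (y j)) N i) / real (N+1))"

definition GG :: "(real \<Rightarrow> real) \<Rightarrow> (real \<Rightarrow> real) \<Rightarrow> (real \<Rightarrow> real) \<Rightarrow> real \<Rightarrow> nat \<Rightarrow> (nat \<Rightarrow> real) \<Rightarrow> (nat \<Rightarrow> real) \<Rightarrow> real" where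
  "GG qp qm Psiinv \<theta> N y x = (\<Prod>i\<in>{1..N}. exp (\<theta> * aa qp qm Psiinv N y i * (if sgnp (llr qp qm (y i)) * x i < 0 then 1 else 0)))"

lemma GG_meas:
  assumes p: "is_pdf qp" and m: "is_pdf qm"
    and yc: "\<And>j. j \<in> {1..N} \<Longrightarrow> (\<lambda>\<omega>. yf \<omega> j) \<in> borel_measurable M"
    and xc: "\<And>j. j \<in> {1..N} \<Longrightarrow> (\<lambda>\<omega>. xf \<omega> j) \<in> borel_measurable M"
  shows "(\<lambda>\<omega>. GG qp qm Psiinv \<theta> N (yf \<omega>) (xf \<omega>)) \<in> borel_measurable M"
  unfolding GG_def
proof (rule borel_measurable_prod)
  fix i assume i: "i \<in> {1..N}"
  have L[measurable]: "llr qp qm \<in> borel_measurable borel" by (rule llr_meas[OF p m])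
  have lc: "(\<lambda>\<omega>. llr qp qm (yf \<omega> j)) \<in> borel_measurable M" if "j \<in> {1..N}" for j
    using measurable_compose[OF yc[OF that] L] by simp
  have rm: "(\<lambda>\<omega>. rank (\<lambda>j. llr qp qm (yf \<omega> j)) N i) \<in> measurable M (count_space UNIV)"
    by (rule rank_meas[OF _ i]) (rule lc)
  have am[measurable]: "(\<lambda>\<omega>. aa qp qm Psiinv N (yf \<omega>) i) \<in> borel_measurable M"
    unfolding aa_def
    by (rule measurable_compose_countable'[where f="\<lambda>k \<omega>. Psiinv (real k / real (N+1))" and I=UNIV, OF _ rm]) simp_all
  have [measurable]: "(\<lambda>\<omega>. llr qp qm (yf \<omega> i)) \<in> borel_measurable M" by (rule lc[OF i])
  have [measurable]: "(\<lambda>\<omega>. xf \<omega> i) \<in> borel_measurable M" by (rule xc[OF i])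
  show "(\<lambda>\<omega>. exp (\<theta> * aa qp qm Psiinv N (yf \<omega>) i * (if sgnp (llr qp qm (yf \<omega> i)) * xf \<omega> i < 0 then 1 else 0))) \<in> borel_measurable M"
    unfolding sgnp_def by measurable
qed


lemma two_point_integral:
  fixes Z :: "'a \<Rightarrow> real" and f :: "real \<Rightarrow> real"
  assumes M: "prob_space M" and Z[measurable]: "Z \<in> borel_measurable M"
    and vals: "\<And>\<omega>. \<omega> \<in> space M \<Longrightarrow> Z \<omega> \<in> {-1, 1}"
    and unif: "measure M {\<omega>\<in>space M. Z \<omega> = 1} = 1/2"
  shows "(\<integral>\<omega>. f (Z \<omega>) \<partial>M) = (f 1 + f (-1)) / 2"
proof -
  interpret prob_space M by (rule M)
  define E where "E = {\<omega>\<in>space M. Z \<omega> = 1}"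
  have "E = Z -` {1} \<inter> space M" unfolding E_def by auto
  hence E[measurable]: "E \<in> sets M" using measurable_sets[OF Z borel_closed[OF closed_singleton]] by simp
  have "(\<integral>\<omega>. f (Z \<omega>) \<partial>M) = (\<integral>\<omega>. f 1 * indicator E \<omega> + f (-1) * (1 - indicator E \<omega>) \<partial>M)"
  proof (rule Bochner_Integration.integral_cong[OF refl])
    fix \<omega> assume w: "\<omega> \<in> space M"
    show "f (Z \<omega>) = f 1 * indicator E \<omega> + f (-1) * (1 - indicator E \<omega>)"
      using vals[OF w] w by (auto simp: E_def indicator_def)
  qed
  also have "\<dots> = f 1 * measure M E + f (-1) * (1 - measure M E)"
  proof -
    have i1: "integrable M (\<lambda>\<omega>. f 1 * indicator E \<omega> :: real)" by (intro integrable_mult_right integrable_real_indicator) (auto simp: less_top[symmetric])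
    have i2: "integrable M (\<lambda>\<omega>. f (-1) * (1 - indicator E \<omega>) :: real)"
      by (intro integrable_mult_right Bochner_Integration.integrable_diff integrable_real_indicator) (auto simp: less_top[symmetric])
    have e3: "(\<integral>\<omega>. 1 - indicator E \<omega> \<partial>M) = 1 - measure M E"
      by (subst Bochner_Integration.integral_diff) (auto simp: less_top[symmetric] prob_space)
    show ?thesis
      using Bochner_Integration.integral_add[OF i1 i2] E e3 by simp
  qed
  also have "measure M E = 1/2" using unif unfolding E_def .
  finally show ?thesis by simp
qed


lemma (in prob_space) E1:
  fixes V :: "'k \<Rightarrow> 'a \<Rightarrow> real \<times> real" and Xw :: "nat \<Rightarrow> 'a \<Rightarrow> real"
    and a s :: "nat \<Rightarrow> real" and \<theta> :: real
  assumes ind: "indep_vars (\<lambda>_. borel) V (\<iota> ` {1..N})"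
    and inj: "inj \<iota>" and pi: "\<And>i. \<pi> (\<iota> i) = i"
    and Xw: "\<And>i \<omega>. i \<in> {1..N} \<Longrightarrow> Xw i \<omega> = fst (V (\<iota> i) \<omega>)"
    and vals: "\<And>i \<omega>. i \<in> {1..N} \<Longrightarrow> \<omega> \<in> space M \<Longrightarrow> Xw i \<omega> \<in> {-1, 1}"
    and unif: "\<And>i. i \<in> {1..N} \<Longrightarrow> measure M {\<omega>\<in>space M. Xw i \<omega> = 1} = 1/2"
    and s: "\<And>i. s i \<in> {-1, 1}"
  shows "(\<integral>\<omega>. (\<Prod>i\<in>{1..N}. exp (\<theta> * a i * (if s i * Xw i \<omega> < 0 then 1 else 0))) \<partial>M)
       = (\<Prod>i\<in>{1..N}. (1 + exp (\<theta> * a i)) / 2)"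
proof -
  define hh where "hh i x = exp (\<theta> * a i * (if s i * x < 0 then 1 else (0::real)))" for i x
  define Z where "Z k \<omega> = hh (\<pi> k) (fst (V k \<omega>))" for k \<omega>
  have hhm[measurable]: "hh i \<in> borel_measurable borel" for i unfolding hh_def[abs_def] by measurable
  have rvV: "random_variable borel (V k)" if "k \<in> \<iota> ` {1..N}" for k
    using ind that unfolding indep_vars_def by auto
  have indZ: "indep_vars (\<lambda>_. borel) Z (\<iota> ` {1..N})"
    unfolding Z_def by (rule indep_vars_compose2[OF ind]) measurable
  have Zm: "Z k \<in> borel_measurable M" if "k \<in> \<iota> ` {1..N}" for k
    unfolding Z_def using rvV[OF that] by measurable
  have Xm: "Xw i \<in> borel_measurable M" if "i \<in> {1..N}" for i
  proof -
    have "Xw i = (\<lambda>\<omega>. fst (V (\<iota> i) \<omega>))" using Xw[OF that] by auto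
    thus ?thesis using rvV[of "\<iota> i"] that by simp
  qed
  have bnd: "\<bar>hh i x\<bar> \<le> 1 + exp (\<theta> * a i)" for i x unfolding hh_def by auto
  have intZ: "integrable M (Z k)" if "k \<in> \<iota> ` {1..N}" for k
    by (rule integrable_const_bound[where B="1 + exp (\<theta> * a (\<pi> k))"]) (auto simp: Zm[OF that] Z_def intro!: AE_I2 bnd)
  have eqprod: "(\<Prod>i\<in>{1..N}. exp (\<theta> * a i * (if s i * Xw i \<omega> < 0 then 1 else 0))) = (\<Prod>k\<in>\<iota> ` {1..N}. Z k \<omega>)" for \<omega>
  proof -
    have "(\<Prod>k\<in>\<iota> ` {1..N}. Z k \<omega>) = (\<Prod>i\<in>{1..N}. Z (\<iota> i) \<omega>)"
      by (rule prod.reindex[OF inj_on_subset[OF inj subset_UNIV], unfolded comp_def])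
    also have "\<dots> = (\<Prod>i\<in>{1..N}. exp (\<theta> * a i * (if s i * Xw i \<omega> < 0 then 1 else 0)))"
      by (rule prod.cong[OF refl]) (simp add: Z_def hh_def pi Xw)
    finally show ?thesis by simp
  qed
  have "(\<integral>\<omega>. (\<Prod>i\<in>{1..N}. exp (\<theta> * a i * (if s i * Xw i \<omega> < 0 then 1 else 0))) \<partial>M)
      = (\<integral>\<omega>. (\<Prod>k\<in>\<iota> ` {1..N}. Z k \<omega>) \<partial>M)" unfolding eqprod ..
  also have "\<dots> = (\<Prod>k\<in>\<iota> ` {1..N}. \<integral>\<omega>. Z k \<omega> \<partial>M)"
    by (rule indep_vars_lebesgue_integral[OF _ indZ intZ]) simp
  also have "\<dots> = (\<Prod>i\<in>{1..N}. \<integral>\<omega>. Z (\<iota> i) \<omega> \<partial>M)"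
    by (rule prod.reindex[OF inj_on_subset[OF inj subset_UNIV], unfolded comp_def])
  also have "\<dots> = (\<Prod>i\<in>{1..N}. (1 + exp (\<theta> * a i)) / 2)"
  proof (rule prod.cong[OF refl])
    fix i assume i: "i \<in> {1..N}"
    have "(\<integral>\<omega>. Z (\<iota> i) \<omega> \<partial>M) = (\<integral>\<omega>. hh i (Xw i \<omega>) \<partial>M)"
      by (simp add: Z_def pi Xw[OF i])
    also have "\<dots> = (hh i 1 + hh i (-1)) / 2"
      by (rule two_point_integral[OF prob_space_axioms Xm[OF i] vals[OF i] unif[OF i]])
    also have "hh i 1 + hh i (-1) = 1 + exp (\<theta> * a i)"
      using s[of i] unfolding hh_def by auto
    finally show "(\<integral>\<omega>. Z (\<iota> i) \<omega> \<partial>M) = (1 + exp (\<theta> * a i)) / 2" .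
  qed
  finally show ?thesis .
qed

lemma (in prob_space) condexp_const:
  fixes Yv Xv :: "'a \<Rightarrow> nat \<Rightarrow> real" and Tv :: "'a \<Rightarrow> nat \<Rightarrow> real" and f :: "'a \<Rightarrow> real"
  assumes indYX: "indep_var (PiM {1..N} (\<lambda>_. borel)) Yv (PiM {1..N} (\<lambda>_. borel)) Xv"
    and p: "is_pdf qp" and m: "is_pdf qm"
    and inner: "\<And>y. (\<integral>\<omega>. GG qp qm Psiinv \<theta> N y (Xv \<omega>) \<partial>M) = c"
    and Gb: "\<And>y x. \<bar>GG qp qm Psiinv \<theta> N y x\<bar> \<le> 1"
    and f: "\<And>\<omega>. \<omega> \<in> space M \<Longrightarrow> f \<omega> = GG qp qm Psiinv \<theta> N (Yv \<omega>) (Xv \<omega>)"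
    and Tv: "\<And>\<omega>. \<omega> \<in> space M \<Longrightarrow> Tv \<omega> = (\<lambda>i\<in>{1..N}. llr qp qm (Yv \<omega> i))"
  shows "AE \<omega> in M. real_cond_exp M (vimage_algebra (space M) Tv (PiM {1..N} (\<lambda>_. borel))) f \<omega> = c"
proof -
  define PiB where "PiB = (PiM {1..N} (\<lambda>_. borel) :: (nat \<Rightarrow> real) measure)"
  define tv where "tv y = (\<lambda>i\<in>{1..N}. llr qp qm (y i))" for y :: "nat \<Rightarrow> real"
  define F where "F = vimage_algebra (space M) Tv PiB"
  have L[measurable]: "llr qp qm \<in> borel_measurable borel" by (rule llr_meas[OF p m])
  have Ym[measurable]: "Yv \<in> M \<rightarrow>\<^sub>M PiB" using indep_var_rv1[OF indYX] unfolding PiB_def .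
  have Xm[measurable]: "Xv \<in> M \<rightarrow>\<^sub>M PiB" using indep_var_rv2[OF indYX] unfolding PiB_def .
  have tvm[measurable]: "tv \<in> PiB \<rightarrow>\<^sub>M PiB" unfolding tv_def PiB_def by measurable
  have Tvm: "Tv \<in> M \<rightarrow>\<^sub>M PiB"
  proof -
    have "(\<lambda>\<omega>. tv (Yv \<omega>)) \<in> M \<rightarrow>\<^sub>M PiB" by measurable
    thus ?thesis by (rule measurable_cong[THEN iffD1, rotated]) (simp add: Tv tv_def)
  qed
  have subalg: "subalgebra M F"
    unfolding subalgebra_def F_def using Tvm by (simp add: measurable_iff_sets)
  interpret S: finite_measure_subalgebra M F
    by (intro finite_measure_subalgebra.intro finite_measure_subalgebra_axioms.intro finite_measure_axioms subalg)
  have GGm: "(\<lambda>z. GG qp qm Psiinv \<theta> N (fst z) (snd z)) \<in> borel_measurable (PiB \<Otimes>\<^sub>M PiB)"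
  proof -
    have a: "fst \<in> PiB \<Otimes>\<^sub>M PiB \<rightarrow>\<^sub>M PiB" "snd \<in> PiB \<Otimes>\<^sub>M PiB \<rightarrow>\<^sub>M PiB" by simp_all
    have b: "(\<lambda>z. fst z j) \<in> borel_measurable (PiB \<Otimes>\<^sub>M PiB)" "(\<lambda>z. snd z j) \<in> borel_measurable (PiB \<Otimes>\<^sub>M PiB)"
      if "j \<in> {1..N}" for j
      using comp_meas[OF a(1)[unfolded PiB_def] that] comp_meas[OF a(2)[unfolded PiB_def] that] unfolding PiB_def by auto
    show ?thesis by (rule GG_meas[OF p m b(1) b(2)])
  qed
  have GGm1: "(\<lambda>x. GG qp qm Psiinv \<theta> N y x) \<in> borel_measurable PiB" for y
  proof -
    have b: "(\<lambda>x. y j) \<in> borel_measurable PiB" "(\<lambda>x. x j) \<in> borel_measurable PiB" if "j \<in> {1..N}" for j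
      using that unfolding PiB_def by auto
    show ?thesis by (rule GG_meas[OF p m b(1) b(2)])
  qed
  have fm: "f \<in> borel_measurable M"
  proof -
    have "(\<lambda>\<omega>. GG qp qm Psiinv \<theta> N (Yv \<omega>) (Xv \<omega>)) \<in> borel_measurable M"
      by (rule GG_meas[OF p m]) (rule comp_meas[OF Ym[unfolded PiB_def]], simp, rule comp_meas[OF Xm[unfolded PiB_def]], simp)
    thus ?thesis by (rule measurable_cong[THEN iffD1, rotated]) (simp add: f)
  qed
  have fint: "integrable M f"
    by (rule integrable_const_bound[where B=1]) (auto simp: fm f Gb intro!: AE_I2)
  have cint: "integrable M (\<lambda>_. c)" by simp
  have key: "(\<integral>x\<in>A. f x \<partial>M) = (\<integral>x\<in>A. c \<partial>M)" if A: "A \<in> sets F" for A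
  proof -
    obtain B where B: "B \<in> sets PiB" and AB: "A = Tv -` B \<inter> space M"
      using A unfolding F_def by (subst (asm) sets_vimage_algebra2) (auto intro: measurable_space[OF Tvm])
    define FF where "FF z = indicator B (tv (fst z)) * GG qp qm Psiinv \<theta> N (fst z) (snd z)" for z
    have FFm: "FF \<in> borel_measurable (PiB \<Otimes>\<^sub>M PiB)" unfolding FF_def using GGm B by measurable
    have indA: "indicator A \<omega> = indicator B (tv (Yv \<omega>))" if "\<omega> \<in> space M" for \<omega>
      using that unfolding AB by (simp add: Tv tv_def indicator_def)
    interpret DY: prob_space "distr M PiB Yv" by (rule prob_space_distr) simp
    interpret DX: prob_space "distr M PiB Xv" by (rule prob_space_distr) simp
    interpret PP: pair_prob_space "distr M PiB Yv" "distr M PiB Xv" ..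
    have joint: "distr M PiB Yv \<Otimes>\<^sub>M distr M PiB Xv = distr M (PiB \<Otimes>\<^sub>M PiB) (\<lambda>\<omega>. (Yv \<omega>, Xv \<omega>))"
      using indYX unfolding indep_var_distribution_eq PiB_def by simp
    have FFint: "integrable (distr M PiB Yv \<Otimes>\<^sub>M distr M PiB Xv) FF"
    proof (rule PP.P.integrable_const_bound[where B=1])
      show "AE x in distr M PiB Yv \<Otimes>\<^sub>M distr M PiB Xv. norm (FF x) \<le> 1"
        using Gb by (intro AE_I2) (auto simp: FF_def indicator_def abs_mult)
      show "FF \<in> borel_measurable (distr M PiB Yv \<Otimes>\<^sub>M distr M PiB Xv)"
        using FFm by (simp add: measurable_cong_sets[OF sets_pair_measure_cong[OF sets_distr sets_distr] refl])
    qed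
    have "(\<integral>x\<in>A. f x \<partial>M) = (\<integral>\<omega>. FF (Yv \<omega>, Xv \<omega>) \<partial>M)"
      unfolding set_lebesgue_integral_def
      by (rule Bochner_Integration.integral_cong[OF refl]) (simp add: indA f FF_def)
    also have "\<dots> = integral\<^sup>L (distr M (PiB \<Otimes>\<^sub>M PiB) (\<lambda>\<omega>. (Yv \<omega>, Xv \<omega>))) FF"
      by (rule Bochner_Integration.integral_distr[symmetric]) (simp_all add: FFm)
    also have "\<dots> = integral\<^sup>L (distr M PiB Yv \<Otimes>\<^sub>M distr M PiB Xv) FF" unfolding joint ..
    also have "\<dots> = (\<integral>y. (\<integral>x. FF (y, x) \<partial>distr M PiB Xv) \<partial>distr M PiB Yv)"
      by (rule PP.integral_fst'[OF FFint, symmetric])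
    also have "\<dots> = (\<integral>y. indicator B (tv y) * c \<partial>distr M PiB Yv)"
    proof (rule Bochner_Integration.integral_cong[OF refl])
      fix y
      have "(\<integral>x. FF (y, x) \<partial>distr M PiB Xv) = (\<integral>x. indicator B (tv y) * GG qp qm Psiinv \<theta> N y x \<partial>distr M PiB Xv)"
        by (simp add: FF_def)
      also have "\<dots> = indicator B (tv y) * (\<integral>x. GG qp qm Psiinv \<theta> N y x \<partial>distr M PiB Xv)" by simp
      also have "(\<integral>x. GG qp qm Psiinv \<theta> N y x \<partial>distr M PiB Xv) = (\<integral>\<omega>. GG qp qm Psiinv \<theta> N y (Xv \<omega>) \<partial>M)"
        by (rule Bochner_Integration.integral_distr) (simp_all add: GGm1)
      also have "\<dots> = c" by (rule inner)
      finally show "(\<integral>x. FF (y, x) \<partial>distr M PiB Xv) = indicator B (tv y) * c" .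
    qed
    also have "\<dots> = (\<integral>\<omega>. indicator B (tv (Yv \<omega>)) * c \<partial>M)"
      by (rule Bochner_Integration.integral_distr) (use B in simp_all)
    also have "\<dots> = (\<integral>x\<in>A. c \<partial>M)"
      unfolding set_lebesgue_integral_def
      by (rule Bochner_Integration.integral_cong[OF refl]) (simp add: indA)
    finally show ?thesis .
  qed
  have "AE \<omega> in M. real_cond_exp M F f \<omega> = c"
    by (rule S.real_cond_exp_charact[OF key fint cint]) simp_all
  thus ?thesis unfolding F_def PiB_def .
qed

lemma restrict_llr_eq: "(\<lambda>i\<in>I. llr qp qm (Y i \<omega>)) = (\<lambda>i\<in>I. llr qp qm ((\<lambda>i\<in>I. Y i \<omega>) i))"
  by (simp add: fun_eq_iff)

lemma per_N:
  fixes qp qm :: "real \<Rightarrow> real" and Psiinv :: "real \<Rightarrow> real"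
    and M :: "'a measure" and X :: "nat \<Rightarrow> nat \<Rightarrow> 'a \<Rightarrow> real" and Y :: "nat \<Rightarrow> 'a \<Rightarrow> real"
    and \<theta> :: real and w' :: nat and N :: nat
  assumes pdf: "is_pdf qp" "is_pdf qm"
    and A3_inv1: "\<forall>u\<in>{0<..<1}. Psiinv u > 0 \<and> Psi qp qm (Psiinv u) = u"
    and M: "prob_space M"
    and indep: "prob_space.indep_vars M (\<lambda>_. borel)
          (\<lambda>k \<omega>. case k of Inl i \<Rightarrow> (X 1 i \<omega>, Y i \<omega>) | Inr (w, i) \<Rightarrow> (X w i \<omega>, 0))
          ({Inl i | i. i \<ge> 1} \<union> {Inr (w, i) | w i. w \<ge> 2 \<and> i \<ge> 1})"
    and X_vals: "\<forall>w\<ge>1. \<forall>i\<ge>1. \<forall>\<omega>\<in>space M. X w i \<omega> \<in> {-1, 1}"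
    and X_unif: "\<forall>w\<ge>2. \<forall>i\<ge>1. measure M {\<omega>\<in>space M. X w i \<omega> = 1} = 1/2"
    and w': "w' \<noteq> 1" "w' \<ge> 1"
    and theta: "\<theta> < 0"
    and N: "N \<ge> 1"
  shows "AE \<omega> in M. real_cond_exp M (gen_sigma M (\<lambda>i \<omega>. llr qp qm (Y i \<omega>)) N)
                 (\<lambda>\<omega>. exp (real N * \<theta> * orb_metric Psiinv N (\<lambda>i. llr qp qm (Y i \<omega>)) (\<lambda>i. X w' i \<omega>))) \<omega>
           = (\<Prod>k\<in>{1..N}. (1 + exp (\<theta> * Psiinv (real k / real (N+1)))) / 2)"
proof -
  interpret prob_space M by (rule M)
  define V where "V = (\<lambda>k \<omega>. case k of Inl i \<Rightarrow> (X 1 i \<omega>, Y i \<omega>) | Inr (w, i) \<Rightarrow> (X w i \<omega>, 0::real))"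
  define I0 :: "(nat + nat \<times> nat) set" where "I0 = ({Inl i | i. i \<ge> 1} \<union> {Inr (w, i) | w i. w \<ge> 2 \<and> i \<ge> 1})"
  have ind: "indep_vars (\<lambda>_. borel) V I0" using indep unfolding V_def I0_def .
  define PiB where "PiB = (PiM {1..N} (\<lambda>_. borel) :: (nat \<Rightarrow> real) measure)"
  define K where "K = (Inl :: nat \<Rightarrow> nat + nat \<times> nat) ` {1..N}"
  define L where "L = (\<lambda>i. Inr (w', i) :: nat + nat \<times> nat) ` {1..N}"
  have w2: "w' \<ge> 2" using w' by simp
  have KI: "K \<subseteq> I0" unfolding K_def I0_def by auto
  have LI: "L \<subseteq> I0" unfolding L_def I0_def using w2 by auto
  have KL: "K \<inter> L = {}" unfolding K_def L_def by auto
  define Yv where "Yv \<omega> = (\<lambda>i\<in>{1..N}. Y i \<omega>)" for \<omega>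
  define Xv where "Xv \<omega> = (\<lambda>i\<in>{1..N}. X w' i \<omega>)" for \<omega>
  define fY where "fY f = (\<lambda>i\<in>{1..N}. snd (f (Inl i :: nat + nat \<times> nat)))" for f :: "nat + nat \<times> nat \<Rightarrow> real \<times> real"
  define fX where "fX f = (\<lambda>i\<in>{1..N}. fst (f (Inr (w', i) :: nat + nat \<times> nat)))" for f :: "nat + nat \<times> nat \<Rightarrow> real \<times> real"
  have fYm: "fY \<in> PiM K (\<lambda>_. borel) \<rightarrow>\<^sub>M PiB"
    unfolding fY_def PiB_def
  proof (rule measurable_restrict)
    fix i :: nat assume i: "i \<in> {1..N}"
    have k: "Inl i \<in> K" using i unfolding K_def by auto
    show "(\<lambda>f :: nat + nat \<times> nat \<Rightarrow> real \<times> real. snd (f (Inl i))) \<in> borel_measurable (PiM K (\<lambda>_. borel))"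
      by (rule measurable_compose[OF measurable_component_singleton[OF k] snd_bm])
  qed
  have fXm: "fX \<in> PiM L (\<lambda>_. borel) \<rightarrow>\<^sub>M PiB"
    unfolding fX_def PiB_def
  proof (rule measurable_restrict)
    fix i :: nat assume i: "i \<in> {1..N}"
    have k: "Inr (w', i) \<in> L" using i unfolding L_def by auto
    show "(\<lambda>f :: nat + nat \<times> nat \<Rightarrow> real \<times> real. fst (f (Inr (w', i)))) \<in> borel_measurable (PiM L (\<lambda>_. borel))"
      by (rule measurable_compose[OF measurable_component_singleton[OF k] fst_bm])
  qed
  have ir: "indep_var (PiM K (\<lambda>_. borel)) (\<lambda>\<omega>. restrict (\<lambda>k. V k \<omega>) K) (PiM L (\<lambda>_. borel)) (\<lambda>\<omega>. restrict (\<lambda>k. V k \<omega>) L)"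
    by (rule indep_var_restrict[OF ind KL KI LI])
  have icomp: "indep_var PiB (fY \<circ> (\<lambda>\<omega>. restrict (\<lambda>k. V k \<omega>) K)) PiB (fX \<circ> (\<lambda>\<omega>. restrict (\<lambda>k. V k \<omega>) L))"
    by (rule indep_var_compose[OF ir fYm fXm])
  have e1: "fY \<circ> (\<lambda>\<omega>. restrict (\<lambda>k. V k \<omega>) K) = Yv"
    unfolding fY_def Yv_def K_def V_def by (auto simp: fun_eq_iff)
  have e2: "fX \<circ> (\<lambda>\<omega>. restrict (\<lambda>k. V k \<omega>) L) = Xv"
    unfolding fX_def Xv_def L_def V_def by (auto simp: fun_eq_iff)
  have indYX: "indep_var PiB Yv PiB Xv" using icomp unfolding e1 e2 .
  define c where "c = (\<Prod>k\<in>{1..N}. (1 + exp (\<theta> * Psiinv (real k / real (N+1)))) / 2)"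
  have aa_pos: "0 < aa qp qm Psiinv N y i" if "i \<in> {1..N}" for y i
  proof -
    have r: "rank (\<lambda>j. llr qp qm (y j)) N i \<in> {1..N}" by (rule rank_range[OF that])
    hence "0 < real (rank (\<lambda>j. llr qp qm (y j)) N i) / real (N+1)" "real (rank (\<lambda>j. llr qp qm (y j)) N i) / real (N+1) < 1"
      by auto
    thus ?thesis unfolding aa_def using A3_inv1 by auto
  qed
  have indL: "indep_vars (\<lambda>_. borel) V ((\<lambda>i. Inr (w', i)) ` {1..N})"
    using indep_vars_subset[OF ind LI] unfolding L_def .
  have inner: "(\<integral>\<omega>. GG qp qm Psiinv \<theta> N y (Xv \<omega>) \<partial>M) = c" for y
  proof -
    have "(\<integral>\<omega>. GG qp qm Psiinv \<theta> N y (Xv \<omega>) \<partial>M)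
        = (\<integral>\<omega>. (\<Prod>i\<in>{1..N}. exp (\<theta> * aa qp qm Psiinv N y i * (if sgnp (llr qp qm (y i)) * X w' i \<omega> < 0 then 1 else 0))) \<partial>M)"
      unfolding GG_def Xv_def by (rule Bochner_Integration.integral_cong[OF refl], rule prod.cong[OF refl]) simp
    also have "\<dots> = (\<Prod>i\<in>{1..N}. (1 + exp (\<theta> * aa qp qm Psiinv N y i)) / 2)"
    proof (rule E1[OF indL])
      show "inj (\<lambda>i. Inr (w', i) :: nat + nat \<times> nat)" by (auto simp: inj_def)
      show "(\<lambda>k. case k of Inl i \<Rightarrow> i | Inr (w, i) \<Rightarrow> i) (Inr (w', i)) = i" for i :: nat by simp
      show "X w' i \<omega> = fst (V (Inr (w', i)) \<omega>)" for i \<omega> unfolding V_def by simp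
      show "X w' i \<omega> \<in> {-1, 1}" if "i \<in> {1..N}" "\<omega> \<in> space M" for i \<omega> using X_vals w' that by auto
      show "measure M {\<omega> \<in> space M. X w' i \<omega> = 1} = 1/2" if "i \<in> {1..N}" for i using X_unif w2 that by auto
      show "sgnp (llr qp qm (y i)) \<in> {-1, 1}" for i by (simp add: sgnp_def)
    qed
    also have "\<dots> = c" unfolding aa_def c_def by (rule prod_rank)
    finally show ?thesis .
  qed
  have Gb: "\<bar>GG qp qm Psiinv \<theta> N y x\<bar> \<le> 1" for y x
  proof -
    have fac: "0 \<le> exp (\<theta> * aa qp qm Psiinv N y i * (if sgnp (llr qp qm (y i)) * x i < 0 then 1 else 0))
       \<and> exp (\<theta> * aa qp qm Psiinv N y i * (if sgnp (llr qp qm (y i)) * x i < 0 then 1 else 0)) \<le> 1"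
      if "i \<in> {1..N}" for i
    proof -
      have "\<theta> * aa qp qm Psiinv N y i \<le> 0" using aa_pos[OF that, of y] theta by (intro mult_nonpos_nonneg) auto
      hence "\<theta> * aa qp qm Psiinv N y i * (if sgnp (llr qp qm (y i)) * x i < 0 then 1 else 0) \<le> 0" by simp
      thus ?thesis by simp
    qed
    have "0 \<le> GG qp qm Psiinv \<theta> N y x" unfolding GG_def by (rule prod_nonneg) (use fac in blast)
    moreover have "GG qp qm Psiinv \<theta> N y x \<le> 1" unfolding GG_def by (rule prod_le_1) (use fac in blast)
    ultimately show ?thesis by simp
  qed
  have fq: "exp (real N * \<theta> * orb_metric Psiinv N (\<lambda>i. llr qp qm (Y i \<omega>)) (\<lambda>i. X w' i \<omega>)) = GG qp qm Psiinv \<theta> N (Yv \<omega>) (Xv \<omega>)" for \<omega>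
  proof -
    have N0: "real N \<noteq> 0" using N by simp
    have "real N * \<theta> * orb_metric Psiinv N (\<lambda>i. llr qp qm (Y i \<omega>)) (\<lambda>i. X w' i \<omega>)
        = (\<Sum>i = 1..N. \<theta> * (Psiinv (real (rank (\<lambda>i. llr qp qm (Y i \<omega>)) N i) / real (N + 1))
             * (if sgnp (llr qp qm (Y i \<omega>)) * X w' i \<omega> < 0 then 1 else 0)))"
      unfolding orb_metric_def using N0 by (simp add: sum_distrib_left)
    also have "\<dots> = (\<Sum>i = 1..N. \<theta> * aa qp qm Psiinv N (Yv \<omega>) i * (if sgnp (llr qp qm (Yv \<omega> i)) * Xv \<omega> i < 0 then 1 else 0))"
    proof (rule sum.cong[OF refl])
      fix i assume i: "i \<in> {1..N}"
      have "rank (\<lambda>i. llr qp qm (Y i \<omega>)) N i = rank (\<lambda>j. llr qp qm (Yv \<omega> j)) N i"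
        by (rule rank_cong[OF _ i]) (simp add: Yv_def)
      thus "\<theta> * (Psiinv (real (rank (\<lambda>i. llr qp qm (Y i \<omega>)) N i) / real (N + 1))
             * (if sgnp (llr qp qm (Y i \<omega>)) * X w' i \<omega> < 0 then 1 else 0))
          = \<theta> * aa qp qm Psiinv N (Yv \<omega>) i * (if sgnp (llr qp qm (Yv \<omega> i)) * Xv \<omega> i < 0 then 1 else 0)"
        unfolding aa_def using i by (simp add: Yv_def Xv_def)
    qed
    finally show ?thesis unfolding GG_def by (simp add: exp_sum)
  qed
  have Tv: "restrict (\<lambda>i. llr qp qm (Y i \<omega>)) {1..N} = (\<lambda>i\<in>{1..N}. llr qp qm (Yv \<omega> i))" for \<omega>
    unfolding Yv_def by (simp add: fun_eq_iff)
  have "AE \<omega> in M. real_cond_exp M (vimage_algebra (space M) (\<lambda>\<omega>. restrict (\<lambda>i. llr qp qm (Y i \<omega>)) {1..N}) (PiM {1..N} (\<lambda>_. borel)))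
          (\<lambda>\<omega>. exp (real N * \<theta> * orb_metric Psiinv N (\<lambda>i. llr qp qm (Y i \<omega>)) (\<lambda>i. X w' i \<omega>))) \<omega> = c"
    by (rule condexp_const[OF indYX[unfolded PiB_def] pdf inner Gb fq Tv])
  thus ?thesis unfolding gen_sigma_def c_def .
qed

theorem lemma3:
  fixes qp qm :: "real \<Rightarrow> real" and Psiinv :: "real \<Rightarrow> real"
    and M :: "'a measure" and X :: "nat \<Rightarrow> nat \<Rightarrow> 'a \<Rightarrow> real" and Y :: "nat \<Rightarrow> 'a \<Rightarrow> real"
    and R \<theta> :: real and w' :: nat
  assumes pdf: "is_pdf qp" "is_pdf qm"
    and llr_defined: "AE y in lborel. qp y = 0 \<longleftrightarrow> qm y = 0"
    and A1: "\<exists>M1 a S1. M1 > 0 \<and> a > 0 \<and> (\<forall>y. \<bar>y\<bar> > M1 \<longrightarrow>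
               qp y < poly S1 \<bar>y\<bar> * exp (- a * \<bar>y\<bar>) \<and> qm y < poly S1 \<bar>y\<bar> * exp (- a * \<bar>y\<bar>))"
    and A2: "\<exists>M2 S2. M2 > 0 \<and> (\<forall>y. \<bar>y\<bar> > M2 \<longrightarrow> \<bar>ln (qp y / qm y)\<bar> < poly S2 \<bar>y\<bar>)"
    and A3_inv1: "\<forall>u\<in>{0<..<1}. Psiinv u > 0 \<and> Psi qp qm (Psiinv u) = u"
    and A3_inv2: "\<forall>t>0. Psiinv (Psi qp qm t) = t"
    and A3_Psi_smooth: "thrice_differentiable_on (Psi qp qm) {0<..}"
    and A3_Psiinv_smooth: "thrice_differentiable_on Psiinv {0<..<1}"
    and M: "prob_space M"
    \<comment> \<open>codeword entries X w i (w >= 1 codeword index, i >= 1 position) and outputs Y i;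
        the pairs (X 1 i, Y i) and the entries X w i, w >= 2, are mutually independent\<close>
    and indep: "prob_space.indep_vars M (\<lambda>_. borel)
          (\<lambda>k \<omega>. case k of Inl i \<Rightarrow> (X 1 i \<omega>, Y i \<omega>) | Inr (w, i) \<Rightarrow> (X w i \<omega>, 0))
          ({Inl i | i. i \<ge> 1} \<union> {Inr (w, i) | w i. w \<ge> 2 \<and> i \<ge> 1})"
    and X_vals: "\<forall>w\<ge>1. \<forall>i\<ge>1. \<forall>\<omega>\<in>space M. X w i \<omega> \<in> {-1, 1}"
    and X_unif: "\<forall>w\<ge>2. \<forall>i\<ge>1. measure M {\<omega>\<in>space M. X w i \<omega> = 1} = 1/2"
    and channel_p: "\<forall>i\<ge>1. \<forall>A\<in>sets borel.
          measure M {\<omega>\<in>space M. X 1 i \<omega> = 1 \<and> Y i \<omega> \<in> A} = 1/2 * measure (density lborel (\<lambda>y. ennreal (qp y))) A"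
    and channel_m: "\<forall>i\<ge>1. \<forall>A\<in>sets borel.
          measure M {\<omega>\<in>space M. X 1 i \<omega> = -1 \<and> Y i \<omega> \<in> A} = 1/2 * measure (density lborel (\<lambda>y. ennreal (qm y))) A"
    and R: "R > 0"
    and w': "w' \<noteq> 1" "w' \<ge> 1"
    and theta: "\<theta> < 0"
  shows "AE \<omega> in M.
     ((\<lambda>N. ln (real_cond_exp M (gen_sigma M (\<lambda>i \<omega>. llr qp qm (Y i \<omega>)) N)
                 (\<lambda>\<omega>. exp (real N * \<theta> * orb_metric Psiinv N (\<lambda>i. llr qp qm (Y i \<omega>)) (\<lambda>i. X w' i \<omega>))) \<omega>)
             / real N)
      \<longlonglongrightarrow> (\<integral>y. ln (1 + exp (\<theta> * \<bar>ln (qp y / qm y)\<bar>)) \<partial>mix_out qp qm) - ln 2)"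
proof -
  interpret psi_ctx qp qm Psiinv using pdf A3_inv1 A3_inv2 by unfold_locales auto
  define c where "c N = (\<Prod>k\<in>{1..N}. (1 + exp (\<theta> * Psiinv (real k / real (N+1)))) / 2)" for N :: nat
  define \<phi> where "\<phi> u = ln (1 + exp (\<theta> * Psiinv u))" for u
  define g where "g t = ln (1 + exp (\<theta> * t))" for t
  define rce where "rce N \<omega> = real_cond_exp M (gen_sigma M (\<lambda>i \<omega>. llr qp qm (Y i \<omega>)) N)
                 (\<lambda>\<omega>. exp (real N * \<theta> * orb_metric Psiinv N (\<lambda>i. llr qp qm (Y i \<omega>)) (\<lambda>i. X w' i \<omega>))) \<omega>" for N \<omega>
  have AEN: "AE \<omega> in M. rce N \<omega> = c N" if "N \<ge> 1" for N
    unfolding rce_def c_def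
    by (rule per_N[OF pdf A3_inv1 M indep X_vals X_unif w' theta that])
  have AEall: "AE \<omega> in M. \<forall>N. N \<ge> 1 \<longrightarrow> rce N \<omega> = c N"
    using AEN by (subst AE_all_countable) (auto intro: AE_I2)
  obtain f1 f2 f3 where dP: "\<forall>x\<in>{0<..<1}. (Psiinv has_real_derivative f1 x) (at x)"
    using A3_Psiinv_smooth unfolding thrice_differentiable_on_def by blast
  have contP: "continuous_on {0<..<1} Psiinv"
    using dP by (intro continuous_at_imp_continuous_on) (auto intro: DERIV_isCont)
  have contphi: "continuous_on {0<..<1} \<phi>"
  proof -
    have "continuous_on {0<..<1} (\<lambda>u. 1 + exp (\<theta> * Psiinv u))" by (intro continuous_intros contP)
    moreover have "\<forall>u\<in>{0<..<1}. 0 < 1 + exp (\<theta> * Psiinv u)" by (simp add: add_pos_pos)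
    ultimately show ?thesis unfolding \<phi>_def[abs_def] by (intro continuous_on_ln) auto
  qed
  have dec: "\<phi> v \<le> \<phi> u" if "0 < u" "u \<le> v" "v < 1" for u v
  proof -
    have "Psiinv u \<le> Psiinv v" by (rule Psiinv_mono[OF that])
    hence "\<theta> * Psiinv v \<le> \<theta> * Psiinv u" using theta by (simp add: mult_left_mono_neg)
    thus ?thesis unfolding \<phi>_def by (simp add: add_pos_pos)
  qed
  have bnd: "0 \<le> \<phi> u \<and> \<phi> u \<le> ln 2" if "0 < u" "u < 1" for u
  proof -
    have "0 < Psiinv u" using inv1'[OF that] by simp
    hence "\<theta> * Psiinv u < 0" using theta by (simp add: mult_neg_pos)
    hence "exp (\<theta> * Psiinv u) \<le> 1" by simp
    hence "1 + exp (\<theta> * Psiinv u) \<le> 2" by simp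
    hence "ln (1 + exp (\<theta> * Psiinv u)) \<le> ln 2" by (subst ln_le_cancel_iff) (auto simp: add_pos_pos)
    moreover have "0 \<le> ln (1 + exp (\<theta> * Psiinv u))" by simp
    ultimately show ?thesis unfolding \<phi>_def by simp
  qed
  have meas: "(\<lambda>u. \<phi> u * indicator {0<..<1} u) \<in> borel_measurable lborel"
  proof -
    have "(\<lambda>x. indicator {0<..<1} x *\<^sub>R \<phi> x) \<in> borel_measurable borel"
      by (rule borel_measurable_continuous_on_indicator) (simp_all add: contphi)
    thus ?thesis by (simp add: mult.commute measurable_cong_sets[OF sets_lborel refl])
  qed
  have lim1: "(\<lambda>N. (\<Sum>k=1..N. \<phi> (real k / real (N+1))) / real N) \<longlonglongrightarrow> (\<integral>u. \<phi> u * indicator {0<..<1} u \<partial>lborel)"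
    by (rule riemann_lim[OF dec bnd meas]) auto
  have ne: "1 + exp x \<noteq> (0::real)" for x by (smt (verit) exp_gt_zero)
  have gm: "g \<in> borel_measurable borel" unfolding g_def[abs_def]
    by (intro borel_measurable_continuous_onI continuous_intros) (auto simp: ne)
  have RHS: "(\<integral>y. ln (1 + exp (\<theta> * \<bar>ln (qp y / qm y)\<bar>)) \<partial>mix_out qp qm) = (\<integral>u. \<phi> u * indicator {0<..<1} u \<partial>lborel)"
    using quantile[OF contP gm] unfolding g_def \<phi>_def llr_def .
  have lim2: "(\<lambda>N. (\<Sum>k=1..N. \<phi> (real k / real (N+1))) / real N - ln 2) \<longlonglongrightarrow> (\<integral>u. \<phi> u * indicator {0<..<1} u \<partial>lborel) - ln 2"
    by (intro tendsto_diff lim1 tendsto_const)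
  have cform: "ln (c N) / real N = (\<Sum>k=1..N. \<phi> (real k / real (N+1))) / real N - ln 2" if "N \<ge> 1" for N
  proof -
    have pos: "0 < (1 + exp (\<theta> * Psiinv (real k / real (N+1)))) / 2" for k by (simp add: add_pos_pos)
    have "ln (c N) = (\<Sum>k=1..N. ln ((1 + exp (\<theta> * Psiinv (real k / real (N+1)))) / 2))"
      unfolding c_def by (rule ln_prod) (use pos in \<open>auto simp: ne\<close>)
    also have "\<dots> = (\<Sum>k=1..N. \<phi> (real k / real (N+1)) - ln 2)"
      by (rule sum.cong[OF refl]) (simp add: \<phi>_def ln_div add_pos_pos ne)
    also have "\<dots> = (\<Sum>k=1..N. \<phi> (real k / real (N+1))) - real N * ln 2"
      by (simp add: sum_subtractf)
    finally show ?thesis using that by (simp add: diff_divide_distrib)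
  qed
  have fin: "AE \<omega> in M. (\<lambda>N. ln (rce N \<omega>) / real N) \<longlonglongrightarrow> (\<integral>u. \<phi> u * indicator {0<..<1} u \<partial>lborel) - ln 2"
  proof (rule AE_mp[OF AEall], rule AE_I2, intro impI)
    fix \<omega> assume h: "\<forall>N. N \<ge> 1 \<longrightarrow> rce N \<omega> = c N"
    have ev: "eventually (\<lambda>N. (\<Sum>k=1..N. \<phi> (real k / real (N+1))) / real N - ln 2 = ln (rce N \<omega>) / real N) sequentially"
      using h cform by (intro eventually_sequentiallyI[of 1]) auto
    show "(\<lambda>N. ln (rce N \<omega>) / real N) \<longlonglongrightarrow> (\<integral>u. \<phi> u * indicator {0<..<1} u \<partial>lborel) - ln 2"
      by (rule Lim_transform_eventually[OF lim2 ev])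
  qed
  thus ?thesis unfolding rce_def RHS .
qed

end
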